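(* Let $(X,d)$ be a sequentially right $K$-complete quasi-pseudometric space and $\varphi:X\to\mathbb{R}\cup\{\infty\}$ a proper, bounded below, nearly lower semicontinuous function. For $x\in X$ let $S(x)=\{y\in X:\varphi(y)+d(y,x)\le\varphi(x)\}$. 1. If $T:X\to X$ satisfies $d(Tx,x)+\varphi(Tx)\le\varphi(x)$ for all $x\in X$, then there exists $z\in X$ with $\varphi(Tz)=\varphi(z)$. 2. If $T:X\rightrightarrows X$ is a set-valued mapping with $S(x)\cap Tx\neq\emptyset$ for every $x\in X$, then there exists $z\in X$ with $\varphi(z)\in\varphi(Tz)$.
   Context: A quasi-pseudometric on $X$ is $d:X\times X\to[0,\infty)$ with $d(x,x)=0$ and $d(x,z)\le d(x,y)+d(y,z)$ (no symmetry). Topology $\tau_d$: neighbourhood base at $x$ given by $\{y:d(x,y)<r\}$, $r>0$; $x_n\to x$ iff $d(x,x_n)\to0$. A sequence $(x_n)$ is right $K$-Cauchy if for every $\varepsilon>0$ there is $n_\varepsilon$ with $d(x_{n+k},x_n)<\varepsilon$ for all $n\ge n_\varepsilon$, $k\in\mathbb{N}$; $X$ is sequentially right $K$-complete if every right $K$-Cauchy sequence converges. $\varphi$ is proper if finite somewhere; nearly lower semicontinuous if $\varphi(x)\le\liminf_n\varphi(x_n)$ for every sequence with pairwise distinct terms converging to $x$. *)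

theory Defs
  imports "HOL-Analysis.Analysis"
begin

definition quasi_pseudometric :: "('a \<Rightarrow> 'a \<Rightarrow> real) \<Rightarrow> bool" where
  "quasi_pseudometric d \<longleftrightarrow>
     (\<forall>x y. 0 \<le> d x y) \<and> (\<forall>x. d x x = 0) \<and> (\<forall>x y z. d x z \<le> d x y + d y z)"

definition qconv :: "('a \<Rightarrow> 'a \<Rightarrow> real) \<Rightarrow> (nat \<Rightarrow> 'a) \<Rightarrow> 'a \<Rightarrow> bool" where
  "qconv d xs x \<longleftrightarrow> (\<lambda>n. d x (xs n)) \<longlonglongrightarrow> 0"

definition right_K_Cauchy :: "('a \<Rightarrow> 'a \<Rightarrow> real) \<Rightarrow> (nat \<Rightarrow> 'a) \<Rightarrow> bool" where
  "right_K_Cauchy d xs \<longleftrightarrow>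
     (\<forall>\<epsilon>>0. \<exists>N. \<forall>n\<ge>N. \<forall>k. d (xs (n + k)) (xs n) < \<epsilon>)"

definition seq_right_K_complete :: "('a \<Rightarrow> 'a \<Rightarrow> real) \<Rightarrow> bool" where
  "seq_right_K_complete d \<longleftrightarrow> (\<forall>xs. right_K_Cauchy d xs \<longrightarrow> (\<exists>x. qconv d xs x))"

text \<open>Functions X -> R \<union> {\<infinity>} are modelled as ereal-valued functions never equal to -\<infinity>.\<close>
definition proper_fun :: "('a \<Rightarrow> ereal) \<Rightarrow> bool" where
  "proper_fun \<phi> \<longleftrightarrow> (\<exists>x. \<phi> x \<noteq> \<infinity>)"

definition bounded_below_fun :: "('a \<Rightarrow> ereal) \<Rightarrow> bool" where
  "bounded_below_fun \<phi> \<longleftrightarrow> (\<exists>c::real. \<forall>x. ereal c \<le> \<phi> x)"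

definition nearly_lsc :: "('a \<Rightarrow> 'a \<Rightarrow> real) \<Rightarrow> ('a \<Rightarrow> ereal) \<Rightarrow> bool" where
  "nearly_lsc d \<phi> \<longleftrightarrow>
     (\<forall>xs x. inj xs \<and> qconv d xs x \<longrightarrow> \<phi> x \<le> liminf (\<lambda>n. \<phi> (xs n)))"

definition S_set :: "('a \<Rightarrow> 'a \<Rightarrow> real) \<Rightarrow> ('a \<Rightarrow> ereal) \<Rightarrow> 'a \<Rightarrow> 'a set" where
  "S_set d \<phi> x = {y. \<phi> y + ereal (d y x) \<le> \<phi> x}"

end

theory Submission
  imports Defs
begin

lemma key:
  fixes d :: "'a \<Rightarrow> 'a \<Rightarrow> real" and f :: "'a \<Rightarrow> real" and D :: "'a set"
  assumes qpm: "quasi_pseudometric d"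
    and cpl: "seq_right_K_complete d"
    and x0: "x0 \<in> D"
    and bnd: "\<forall>x\<in>D. c \<le> f x"
    and lsc: "\<And>xs x L. inj xs \<Longrightarrow> (\<forall>n. xs n \<in> D) \<Longrightarrow> qconv d xs x \<Longrightarrow>
               (\<lambda>n. f (xs n)) \<longlonglongrightarrow> L \<Longrightarrow> x \<in> D \<and> f x \<le> L"
  shows "\<exists>z\<in>D. \<forall>y\<in>D. f y + d y z \<le> f z \<longrightarrow> f z \<le> f y"
proof (rule ccontr)
  assume na: "\<not> ?thesis"
  have tri: "\<And>x y z. d x z \<le> d x y + d y z" and dnn: "\<And>x y. 0 \<le> d x y"
    and d0: "\<And>x. d x x = 0"
    using qpm unfolding quasi_pseudometric_def by auto
  define S where "S x = {y\<in>D. f y + d y x \<le> f x}" for x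
  have Strans: "z \<in> S x" if "y \<in> S x" "z \<in> S y" for x y z
    using that tri[of z x y] unfolding S_def by force
  define P where "P n x y \<longleftrightarrow> y \<in> S x \<and> f y < f x \<and> f y < Inf (f ` S x) + 1 / (real n + 1)"
    for n x y
  have exP: "\<exists>y. P n x y" if "x \<in> D" for n x
  proof -
    have "\<exists>y0. y0 \<in> S x \<and> f y0 < f x" using na that unfolding S_def by (auto simp: not_le)
    then obtain y0 where y0: "y0 \<in> S x" "f y0 < f x" by blast
    have bdd: "bdd_below (f ` S x)" using bnd unfolding S_def bdd_below_def by auto
    have "Inf (f ` S x) \<le> f y0" using bdd y0 by (meson cInf_lower imageI)
    hence "Inf (f ` S x) < min (f x) (Inf (f ` S x) + 1 / (real n + 1))"
      using y0 by (simp add: add_pos_pos)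
    then obtain t where "t \<in> f ` S x" "t < min (f x) (Inf (f ` S x) + 1 / (real n + 1))"
      using cInf_less_iff[of "f ` S x"] bdd y0 by blast
    thus ?thesis unfolding P_def by auto
  qed
  define nxt where "nxt n x = (SOME y. P n x y)" for n x
  define xs where "xs = rec_nat x0 (\<lambda>n x. nxt n x)"
  have xs0: "xs 0 = x0" and xsS: "xs (Suc n) = nxt n (xs n)" for n
    unfolding xs_def by auto
  have xsD: "xs n \<in> D" for n
  proof (induction n)
    case 0 then show ?case using x0 xs0 by simp
  next
    case (Suc n)
    have "P n (xs n) (xs (Suc n))" unfolding xsS nxt_def using exP[OF Suc] by (rule someI_ex)
    then show ?case unfolding P_def S_def by auto
  qed
  have Pn: "P n (xs n) (xs (Suc n))" for n
    unfolding xsS nxt_def using exP[OF xsD] by (rule someI_ex)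
  have dec: "f (xs (Suc n)) < f (xs n)" for n using Pn unfolding P_def by auto
  have Sk: "k = 0 \<or> xs (n + k) \<in> S (xs n)" for n k
  proof (induction k)
    case (Suc k)
    have "xs (Suc (n + k)) \<in> S (xs (n + k))" using Pn unfolding P_def by auto
    with Suc show ?case using Strans by (auto simp del: add_Suc_right simp add: add_Suc_right[symmetric])
  qed simp
  have Sk2: "f (xs (n + k)) + d (xs (n + k)) (xs n) \<le> f (xs n)" for n k
    using Sk[of k n] d0 unfolding S_def by auto
  have antim: "f (xs m) \<le> f (xs n)" if "n \<le> m" for n m
    using Sk2[of n "m - n"] dnn[of "xs m" "xs n"] that by simp
  have stmono: "strict_mono (\<lambda>n. - f (xs n))"
    by (rule strict_monoI_Suc) (use dec in auto)
  have injxs: "inj xs"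
  proof (rule injI)
    fix a b assume "xs a = xs b"
    thus "a = b" using stmono unfolding strict_mono_def
      by (metis neq_iff order_less_irrefl)
  qed
  have decseq: "decseq (\<lambda>n. f (xs n))" unfolding decseq_def using antim by auto
  have bddf: "c \<le> f (xs n)" for n using bnd xsD by auto
  obtain L where L: "(\<lambda>n. f (xs n)) \<longlonglongrightarrow> L" and Lle0: "\<forall>i. L \<le> f (xs i)"
    using decseq_convergent[OF decseq, of c] bddf by blast
  have Lle: "L \<le> f (xs n)" for n using Lle0 by blast
  have cauchy: "right_K_Cauchy d xs"
    unfolding right_K_Cauchy_def
  proof (intro allI impI)
    fix e :: real assume e: "e > 0"
    obtain N where N: "\<forall>n\<ge>N. \<bar>f (xs n) - L\<bar> < e"
      using LIMSEQ_D[OF L e] by (auto simp: dist_real_def)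
    show "\<exists>N. \<forall>n\<ge>N. \<forall>k. d (xs (n + k)) (xs n) < e"
    proof (intro exI allI impI)
      fix n k assume "N \<le> n"
      then show "d (xs (n + k)) (xs n) < e" using N Sk2[of n k] Lle[of "n+k"] by force
    qed
  qed
  then obtain x where qx: "qconv d xs x" using cpl unfolding seq_right_K_complete_def by blast
  have xD: "x \<in> D" and fx: "f x \<le> L" using lsc[OF injxs _ qx L] xsD by auto
  have lim0: "(\<lambda>n. d x (xs n)) \<longlonglongrightarrow> 0" using qx unfolding qconv_def .
  have xS: "x \<in> S (xs n)" for n
  proof -
    have "d x (xs n) \<le> d x (xs (n + k)) + (f (xs n) - L)" for k
      using tri[of x "xs n" "xs (n+k)"] Sk2[of n k] Lle[of "n+k"] by linarith
    moreover have "(\<lambda>k. d x (xs (n + k)) + (f (xs n) - L)) \<longlonglongrightarrow> 0 + (f (xs n) - L)"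
      by (intro tendsto_intros) (use LIMSEQ_ignore_initial_segment[OF lim0, of n] in \<open>simp add: add.commute\<close>)
    ultimately have "d x (xs n) \<le> f (xs n) - L"
      by (intro LIMSEQ_le_const[where X="\<lambda>k. d x (xs (n + k)) + (f (xs n) - L)"]) auto
    then show ?thesis using xD fx unfolding S_def by auto
  qed
  have "\<exists>y. y \<in> S x \<and> f y < f x" using na xD unfolding S_def by (auto simp: not_le)
  then obtain y where y: "y \<in> S x" "f y < f x" by blast
  have "L \<le> f y"
  proof (rule ccontr)
    assume "\<not> L \<le> f y"
    hence "0 < L - f y" by simp
    then obtain n where n: "inverse (real (Suc n)) < L - f y"
      using reals_Archimedean by blast
    have ys: "y \<in> S (xs n)" using Strans[OF xS y(1)] .
    have bdd: "bdd_below (f ` S (xs n))" using bnd unfolding S_def bdd_below_def by auto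
    have "Inf (f ` S (xs n)) \<le> f y" using bdd ys by (meson cInf_lower imageI)
    moreover have "f (xs (Suc n)) < Inf (f ` S (xs n)) + 1 / (real n + 1)"
      using Pn unfolding P_def by auto
    moreover have "L \<le> f (xs (Suc n))" by (rule Lle)
    ultimately show False using n by (simp add: inverse_eq_divide add.commute)
  qed
  then show False using y fx by linarith
qed

theorem theorem3p7:
  fixes d :: "'a \<Rightarrow> 'a \<Rightarrow> real" and \<phi> :: "'a \<Rightarrow> ereal"
  assumes "quasi_pseudometric d"
    and "seq_right_K_complete d"
    and "\<forall>x. \<phi> x \<noteq> -\<infinity>"
    and "proper_fun \<phi>"
    and "bounded_below_fun \<phi>"
    and "nearly_lsc d \<phi>"
  shows "(\<forall>T :: 'a \<Rightarrow> 'a. (\<forall>x. ereal (d (T x) x) + \<phi> (T x) \<le> \<phi> x) \<longrightarrow>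
            (\<exists>z. \<phi> (T z) = \<phi> z))
       \<and> (\<forall>T :: 'a \<Rightarrow> 'a set. (\<forall>x. S_set d \<phi> x \<inter> T x \<noteq> {}) \<longrightarrow>
            (\<exists>z. \<phi> z \<in> \<phi> ` T z))"
proof -
  note A = assms
  define f where "f x = real_of_ereal (\<phi> x)" for x
  define D where "D = {x. \<phi> x \<noteq> \<infinity>}"
  have phiD: "\<phi> x = ereal (f x)" if "x \<in> D" for x
    using that A(3) unfolding D_def f_def by (cases "\<phi> x") auto
  obtain x0 where x0: "x0 \<in> D" using A(4) unfolding proper_fun_def D_def by auto
  obtain c :: real where c: "\<forall>x. ereal c \<le> \<phi> x" using A(5) unfolding bounded_below_fun_def by auto
  have bnd: "\<forall>x\<in>D. c \<le> f x" using c phiD by (metis ereal_less_eq(3))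
  have lsc: "x \<in> D \<and> f x \<le> L" if "inj xs" "\<forall>n. xs n \<in> D" "qconv d xs x"
     "(\<lambda>n. f (xs n)) \<longlonglongrightarrow> L" for xs x L
  proof -
    have "\<phi> x \<le> liminf (\<lambda>n. \<phi> (xs n))" using A(6) that unfolding nearly_lsc_def by blast
    also have "(\<lambda>n. \<phi> (xs n)) = (\<lambda>n. ereal (f (xs n)))" using phiD that(2) by auto
    also have "liminf (\<lambda>n. ereal (f (xs n))) = ereal L"
      using tendsto_ereal[OF that(4)] by (intro lim_imp_Liminf) simp_all
    finally have le: "\<phi> x \<le> ereal L" .
    hence xD: "x \<in> D" unfolding D_def by auto
    with le phiD show ?thesis by auto
  qed
  have "\<exists>z\<in>D. \<forall>y\<in>D. f y + d y z \<le> f z \<longrightarrow> f z \<le> f y"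
    by (rule key[OF A(1) A(2) x0 bnd lsc])
  then obtain z where zD: "z \<in> D" and zg: "\<forall>y\<in>D. f y + d y z \<le> f z \<longrightarrow> f z \<le> f y"
    by (elim bexE)
  have dnn: "\<And>x y. 0 \<le> d x y" using A(1) unfolding quasi_pseudometric_def by auto
  have good: "\<phi> y = \<phi> z" if "y \<in> S_set d \<phi> z" for y
  proof -
    have le: "\<phi> y + ereal (d y z) \<le> ereal (f z)" using that phiD[OF zD] unfolding S_set_def by auto
    have yD: "y \<in> D" using le unfolding D_def by auto
    have fy: "f y + d y z \<le> f z" using le phiD[OF yD] by simp
    have "f z \<le> f y" using zg yD fy by blast
    with fy dnn[of y z] have "f y = f z" by linarith
    thus ?thesis using phiD yD zD by simp
  qed
  have P2: "\<forall>T :: 'a \<Rightarrow> 'a set. (\<forall>x. S_set d \<phi> x \<inter> T x \<noteq> {}) \<longrightarrow> (\<exists>z. \<phi> z \<in> \<phi> ` T z)"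
  proof (intro allI impI)
    fix T :: "'a \<Rightarrow> 'a set" assume "\<forall>x. S_set d \<phi> x \<inter> T x \<noteq> {}"
    then obtain y where "y \<in> S_set d \<phi> z" "y \<in> T z" by blast
    thus "\<exists>z. \<phi> z \<in> \<phi> ` T z" using good by (metis image_eqI)
  qed
  have P1: "\<forall>T :: 'a \<Rightarrow> 'a. (\<forall>x. ereal (d (T x) x) + \<phi> (T x) \<le> \<phi> x) \<longrightarrow> (\<exists>z. \<phi> (T z) = \<phi> z)"
  proof (intro allI impI)
    fix T :: "'a \<Rightarrow> 'a" assume h: "\<forall>x. ereal (d (T x) x) + \<phi> (T x) \<le> \<phi> x"
    have "T z \<in> S_set d \<phi> z" using h unfolding S_set_def by (simp add: add.commute)
    thus "\<exists>z. \<phi> (T z) = \<phi> z" using good by blast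
  qed
  show ?thesis using P1 P2 by blast
qed

end
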